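(* Let $B$ be a soluble skew left brace and let $r_B\colon B\times B\to B\times B$, $r_B(a,b)=(\lambda_a(b),\lambda_a(b)^{-1}ab)$, be its associated solution of the Yang–Baxter equation. Then $(B,r_B)$ is uniformly multidecomposable.
   Context: A skew left brace (brace) is a set $B$ with two group structures $(B,+)$ and $(B,\cdot)$ (product by juxtaposition) such that $a(b+c)=ab-a+ac$; common identity $0$; $\lambda_a(b)=-a+ab$. An ideal of $B$ is a subset that is a normal subgroup of $(B,+)$ and of $(B,\cdot)$ and is invariant under all $\lambda_b$. For ideals $I,J$, $[I,J]$ is the smallest ideal containing $[I,J]_+$, $[I,J]_\cdot$ and all $ij-(i+j)$ ($i\in I,j\in J$). $B$ is abelian if $[B,B]=0$ (i.e. $ab=a+b=b+a$ for all $a,b$). $B$ is soluble if there is a chain $B=I_0\supseteq I_1\supseteq\cdots\supseteq I_n=0$ with each $I_i$ an ideal of the brace $I_{i-1}$ and $I_{i-1}/I_i$ abelian. A solution $(X,r)$ of the YBE is a set $X$ with a bijection $r:X\times X\to X\times X$ satisfying $r_{12}r_{23}r_{12}=r_{23}r_{12}r_{23}$ ($r_{12}=r\times\mathrm{id}$, $r_{23}=\mathrm{id}\times r$), both of whose components are bijective (non-degenerate). A partition $\mathcal P$ of a set is uniform if all its blocks have the same cardinality. For a partition $\mathcal P=\{X_i\}_{i\in I}$ of $X$, $(X,r)$ is (uniformly) $\mathcal P$-decomposable if ($\mathcal P$ is uniform and) $r(X_i\times X_j)=X_j\times X_i$ for all $i,j$. $(X,r)$ is (uniformly) multidecomposable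 if there is a chain $X=X_0\supseteq X_1\supseteq\cdots\supseteq X_n$ with $|X_n|=1$ such that for each $0\le i\le n-1$ there is a (uniform) partition $\mathcal P_i$ of $X_i$ with $X_{i+1}\in\mathcal P_i$ and $(X_i,r|_{X_i\times X_i})$ (uniformly) $\mathcal P_i$-decomposable. *)

theory Defs
  imports "HOL-Algebra.Coset" "HOL-Library.Disjoint_Sets" "HOL-Library.Equipollence"
begin

text \<open>A skew left brace is given by two group structures A (additive, written with
  the HOL-Algebra operation mult A) and M (multiplicative) on the same carrier with
  the same identity, satisfying a(b+c) = ab - a + ac.\<close>

definition skew_brace :: "('a, 'b) monoid_scheme \<Rightarrow> ('a, 'c) monoid_scheme \<Rightarrow> bool" where
  "skew_brace A M \<longleftrightarrow> group A \<and> group M \<and> carrier A = carrier M \<and> \<one>\<^bsub>A\<^esub> = \<one>\<^bsub>M\<^esub> \<and>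
     (\<forall>a\<in>carrier A. \<forall>b\<in>carrier A. \<forall>c\<in>carrier A.
        a \<otimes>\<^bsub>M\<^esub> (b \<otimes>\<^bsub>A\<^esub> c) = (a \<otimes>\<^bsub>M\<^esub> b) \<otimes>\<^bsub>A\<^esub> (inv\<^bsub>A\<^esub> a) \<otimes>\<^bsub>A\<^esub> (a \<otimes>\<^bsub>M\<^esub> c))"

definition brace_lambda :: "('a, 'b) monoid_scheme \<Rightarrow> ('a, 'c) monoid_scheme \<Rightarrow> 'a \<Rightarrow> 'a \<Rightarrow> 'a" where
  "brace_lambda A M a b = inv\<^bsub>A\<^esub> a \<otimes>\<^bsub>A\<^esub> (a \<otimes>\<^bsub>M\<^esub> b)"

definition brace_ideal :: "('a, 'b) monoid_scheme \<Rightarrow> ('a, 'c) monoid_scheme \<Rightarrow> 'a set \<Rightarrow> bool" where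
  "brace_ideal A M I \<longleftrightarrow> I \<lhd> A \<and> I \<lhd> M \<and>
     (\<forall>b\<in>carrier A. \<forall>x\<in>I. brace_lambda A M b x \<in> I)"

text \<open>The quotient brace J/I (I an ideal of J) is abelian: in the quotient,
  xy = x+y = y+x for all classes, i.e. the corresponding differences lie in I.\<close>
definition brace_abelian_quotient ::
  "('a, 'b) monoid_scheme \<Rightarrow> ('a, 'c) monoid_scheme \<Rightarrow> 'a set \<Rightarrow> 'a set \<Rightarrow> bool" where
  "brace_abelian_quotient A M J I \<longleftrightarrow>
     (\<forall>a\<in>J. \<forall>b\<in>J.
        inv\<^bsub>A\<^esub> (a \<otimes>\<^bsub>A\<^esub> b) \<otimes>\<^bsub>A\<^esub> (a \<otimes>\<^bsub>M\<^esub> b) \<in> I \<and>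
        inv\<^bsub>A\<^esub> (b \<otimes>\<^bsub>A\<^esub> a) \<otimes>\<^bsub>A\<^esub> (a \<otimes>\<^bsub>A\<^esub> b) \<in> I)"

definition soluble_brace :: "('a, 'b) monoid_scheme \<Rightarrow> ('a, 'c) monoid_scheme \<Rightarrow> bool" where
  "soluble_brace A M \<longleftrightarrow> (\<exists>(I :: nat \<Rightarrow> 'a set) n.
     I 0 = carrier A \<and> I n = {\<one>\<^bsub>A\<^esub>} \<and>
     (\<forall>i<n. I (Suc i) \<subseteq> I i \<and>
        brace_ideal (A\<lparr>carrier := I i\<rparr>) (M\<lparr>carrier := I i\<rparr>) (I (Suc i)) \<and>
        brace_abelian_quotient A M (I i) (I (Suc i))))"

definition brace_solution :: "('a, 'b) monoid_scheme \<Rightarrow> ('a, 'c) monoid_scheme \<Rightarrow> 'a \<times> 'a \<Rightarrow> 'a \<times> 'a" where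
  "brace_solution A M p = (case p of (a, b) \<Rightarrow>
     (brace_lambda A M a b, inv\<^bsub>M\<^esub> (brace_lambda A M a b) \<otimes>\<^bsub>M\<^esub> a \<otimes>\<^bsub>M\<^esub> b))"

definition uniform_partition :: "'a set \<Rightarrow> 'a set set \<Rightarrow> bool" where
  "uniform_partition X P \<longleftrightarrow> partition_on X P \<and> (\<forall>Y\<in>P. \<forall>Z\<in>P. Y \<approx> Z)"

definition decomposable :: "('a \<times> 'a \<Rightarrow> 'a \<times> 'a) \<Rightarrow> 'a set set \<Rightarrow> bool" where
  "decomposable r P \<longleftrightarrow> (\<forall>Y\<in>P. \<forall>Z\<in>P. r ` (Y \<times> Z) = Z \<times> Y)"

definition uniformly_multidecomposable :: "'a set \<Rightarrow> ('a \<times> 'a \<Rightarrow> 'a \<times> 'a) \<Rightarrow> bool" where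
  "uniformly_multidecomposable X r \<longleftrightarrow> (\<exists>(Xs :: nat \<Rightarrow> 'a set) n.
     Xs 0 = X \<and> (\<exists>x. Xs n = {x}) \<and>
     (\<forall>i<n. Xs (Suc i) \<subseteq> Xs i \<and>
        (\<exists>P. uniform_partition (Xs i) P \<and> Xs (Suc i) \<in> P \<and> decomposable r P)))"

end

theory Submission
  imports Defs
begin

lemma step_lemma:
  fixes A :: "('a, 'b) monoid_scheme" and M :: "('a, 'c) monoid_scheme"
  assumes gA: "group A" and gM: "group M" and cM: "carrier M = carrier A"
    and sKA: "subgroup K A" and sKM: "subgroup K M"
    and nJ: "normal J (A\<lparr>carrier := K\<rparr>)"
    and ab: "brace_abelian_quotient A M K J"
  shows "\<exists>P. uniform_partition K P \<and> J \<in> P \<and> decomposable (brace_solution A M) P"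
proof -
  define G where "G = A\<lparr>carrier := K\<rparr>"
  interpret A: group A by (rule gA)
  interpret M: group M by (rule gM)
  interpret N: normal J G using nJ G_def by simp
  have cG: "carrier G = K" by (simp add: G_def)
  have mG: "\<And>x y. x \<otimes>\<^bsub>G\<^esub> y = x \<otimes>\<^bsub>A\<^esub> y" by (simp add: G_def)
  have iG: "\<And>x. x \<in> K \<Longrightarrow> inv\<^bsub>G\<^esub> x = inv\<^bsub>A\<^esub> x"
    using A.m_inv_consistent[OF sKA] G_def by simp
  have oG: "\<one>\<^bsub>G\<^esub> = \<one>\<^bsub>A\<^esub>" by (simp add: G_def)
  have KA: "K \<subseteq> carrier A" using sKA subgroup.subset by blast
  have sJ: "subgroup J G" by (rule N.subgroup_axioms)
  have JK: "J \<subseteq> K" using N.subset cG by simp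
  define cls where "cls x = J #>\<^bsub>G\<^esub> x" for x
  have clsJ: "\<And>h. h \<in> J \<Longrightarrow> cls h = J"
    unfolding cls_def using N.coset_join2 sJ JK cG by auto
  have cls1: "cls \<one>\<^bsub>A\<^esub> = J"
    using clsJ subgroup.one_closed[OF sJ] oG by simp
  have sum: "\<And>x y. x \<in> K \<Longrightarrow> y \<in> K \<Longrightarrow> cls x <#>\<^bsub>G\<^esub> cls y = cls (x \<otimes>\<^bsub>A\<^esub> y)"
    unfolding cls_def using N.rcos_sum cG mG by metis
  have crit: "\<And>p q. p \<in> K \<Longrightarrow> q \<in> K \<Longrightarrow> inv\<^bsub>A\<^esub> q \<otimes>\<^bsub>A\<^esub> p \<in> J \<Longrightarrow> cls p = cls q"
  proof -
    fix p q assume p: "p \<in> K" and q: "q \<in> K" and h: "inv\<^bsub>A\<^esub> q \<otimes>\<^bsub>A\<^esub> p \<in> J"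
    have hK: "inv\<^bsub>A\<^esub> q \<otimes>\<^bsub>A\<^esub> p \<in> K" using h JK by auto
    have "p = q \<otimes>\<^bsub>A\<^esub> (inv\<^bsub>A\<^esub> q \<otimes>\<^bsub>A\<^esub> p)"
      using p q KA by (simp add: A.m_assoc[symmetric] subsetD)
    then have "cls p = cls q <#>\<^bsub>G\<^esub> cls (inv\<^bsub>A\<^esub> q \<otimes>\<^bsub>A\<^esub> p)"
      using sum[OF q hK] by simp
    also have "\<dots> = cls q <#>\<^bsub>G\<^esub> cls \<one>\<^bsub>A\<^esub>" using clsJ[OF h] cls1 by simp
    also have "\<dots> = cls q" using sum[OF q] q KA subgroup.one_closed[OF sKA] by (simp add: subsetD)
    finally show "cls p = cls q" .
  qed
  have KM: "K \<subseteq> carrier M" using KA cM by simp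
  have aK: "\<And>x y. x \<in> K \<Longrightarrow> y \<in> K \<Longrightarrow> x \<otimes>\<^bsub>A\<^esub> y \<in> K"
    using subgroup.m_closed[OF sKA] by blast
  have iK: "\<And>x. x \<in> K \<Longrightarrow> inv\<^bsub>A\<^esub> x \<in> K"
    using subgroup.m_inv_closed[OF sKA] by blast
  have mK: "\<And>x y. x \<in> K \<Longrightarrow> y \<in> K \<Longrightarrow> x \<otimes>\<^bsub>M\<^esub> y \<in> K"
    using subgroup.m_closed[OF sKM] by blast
  have imK: "\<And>x. x \<in> K \<Longrightarrow> inv\<^bsub>M\<^esub> x \<in> K"
    using subgroup.m_inv_closed[OF sKM] by blast
  have ab1: "\<And>a b. a \<in> K \<Longrightarrow> b \<in> K \<Longrightarrow> cls (a \<otimes>\<^bsub>M\<^esub> b) = cls (a \<otimes>\<^bsub>A\<^esub> b)"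
    using ab crit aK mK unfolding brace_abelian_quotient_def by blast
  have ab2: "\<And>a b. a \<in> K \<Longrightarrow> b \<in> K \<Longrightarrow> cls (a \<otimes>\<^bsub>A\<^esub> b) = cls (b \<otimes>\<^bsub>A\<^esub> a)"
    using ab crit aK unfolding brace_abelian_quotient_def by blast
  have fwd: "\<And>x y. x \<in> K \<Longrightarrow> y \<in> K \<Longrightarrow>
     fst (brace_solution A M (x, y)) \<in> K \<and> snd (brace_solution A M (x, y)) \<in> K \<and>
     cls (fst (brace_solution A M (x, y))) = cls y \<and> cls (snd (brace_solution A M (x, y))) = cls x"
  proof -
    fix x y assume x: "x \<in> K" and y: "y \<in> K"
    define l where "l = brace_lambda A M x y"
    define w where "w = inv\<^bsub>M\<^esub> l \<otimes>\<^bsub>M\<^esub> x \<otimes>\<^bsub>M\<^esub> y"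
    have lK: "l \<in> K" unfolding l_def brace_lambda_def using x y aK iK mK by blast
    have wK: "w \<in> K" unfolding w_def using x y lK mK imK by blast
    have xA: "x \<in> carrier A" and yA: "y \<in> carrier A" and lA: "l \<in> carrier A" and wA: "w \<in> carrier A"
      using x y lK wK KA by auto
    have "cls l = cls (inv\<^bsub>A\<^esub> x) <#>\<^bsub>G\<^esub> cls (x \<otimes>\<^bsub>M\<^esub> y)"
      unfolding l_def brace_lambda_def using sum iK mK x y by simp
    also have "\<dots> = cls (inv\<^bsub>A\<^esub> x) <#>\<^bsub>G\<^esub> cls (x \<otimes>\<^bsub>A\<^esub> y)" using ab1 x y by simp
    also have "\<dots> = cls (inv\<^bsub>A\<^esub> x \<otimes>\<^bsub>A\<^esub> (x \<otimes>\<^bsub>A\<^esub> y))" using sum iK aK x y by simp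
    also have "\<dots> = cls y" using xA yA by (simp add: A.m_assoc[symmetric])
    finally have cl: "cls l = cls y" .
    have lw: "l \<otimes>\<^bsub>M\<^esub> w = x \<otimes>\<^bsub>M\<^esub> y"
    proof -
      have xM: "x \<in> carrier M" and yM: "y \<in> carrier M" and lM: "l \<in> carrier M" using xA yA lA cM by auto
      show ?thesis unfolding w_def using xM yM lM
        by (metis M.inv_closed M.m_assoc M.m_closed M.r_inv M.l_one)
    qed
    have "cls (y \<otimes>\<^bsub>A\<^esub> w) = cls y <#>\<^bsub>G\<^esub> cls w" using sum y wK by simp
    also have "\<dots> = cls (l \<otimes>\<^bsub>A\<^esub> w)" using sum[OF lK wK] cl by simp
    also have "\<dots> = cls (l \<otimes>\<^bsub>M\<^esub> w)" using ab1 lK wK by simp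
    also have "\<dots> = cls (y \<otimes>\<^bsub>A\<^esub> x)" using lw ab1 ab2 x y by simp
    finally have c2: "cls (y \<otimes>\<^bsub>A\<^esub> w) = cls (y \<otimes>\<^bsub>A\<^esub> x)" .
    have "cls w = cls (inv\<^bsub>A\<^esub> y \<otimes>\<^bsub>A\<^esub> (y \<otimes>\<^bsub>A\<^esub> w))" using yA wA by (simp add: A.m_assoc[symmetric])
    also have "\<dots> = cls (inv\<^bsub>A\<^esub> y) <#>\<^bsub>G\<^esub> cls (y \<otimes>\<^bsub>A\<^esub> w)" using sum iK aK y wK by simp
    also have "\<dots> = cls (inv\<^bsub>A\<^esub> y) <#>\<^bsub>G\<^esub> cls (y \<otimes>\<^bsub>A\<^esub> x)" using c2 by simp
    also have "\<dots> = cls (inv\<^bsub>A\<^esub> y \<otimes>\<^bsub>A\<^esub> (y \<otimes>\<^bsub>A\<^esub> x))" using sum iK aK x y by simp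
    also have "\<dots> = cls x" using xA yA by (simp add: A.m_assoc[symmetric])
    finally have cw: "cls w = cls x" .
    show "fst (brace_solution A M (x, y)) \<in> K \<and> snd (brace_solution A M (x, y)) \<in> K \<and>
     cls (fst (brace_solution A M (x, y))) = cls y \<and> cls (snd (brace_solution A M (x, y))) = cls x"
      using cl cw lK wK unfolding brace_solution_def l_def w_def by simp
  qed
  have mem: "\<And>z c. c \<in> K \<Longrightarrow> z \<in> cls c \<longleftrightarrow> z \<in> K \<and> cls z = cls c"
  proof
    fix z c assume c: "c \<in> K" and z: "z \<in> cls c"
    have "z \<in> K" using z c N.r_coset_subset_G[of J c] JK cG unfolding cls_def by auto
    moreover have "cls c = cls z" using N.repr_independence[of z J c] z c cG sJ unfolding cls_def by simp
    ultimately show "z \<in> K \<and> cls z = cls c" by simp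
  next
    fix z c assume c: "c \<in> K" and z: "z \<in> K \<and> cls z = cls c"
    then show "z \<in> cls c" using N.rcos_self[of z J] cG sJ unfolding cls_def by metis
  qed
  define P where "P = rcosets\<^bsub>G\<^esub> J"
  have Pdef: "P = cls ` K" unfolding P_def RCOSETS_def cls_def cG by auto
  have part: "partition_on K P"
    unfolding partition_on_def
  proof (intro conjI)
    show "\<Union> P = K" using N.rcosets_part_G[OF sJ] cG P_def by simp
    show "disjoint P" using N.rcos_disjoint[OF sJ] P_def by (simp add: disjoint_def pairwise_def disjnt_def)
    show "{} \<notin> P" using Pdef mem by auto
  qed
  have eq: "\<forall>Y\<in>P. \<forall>Z\<in>P. Y \<approx> Z"
  proof (intro ballI)
    fix Y Z assume "Y \<in> P" "Z \<in> P"
    then have "J \<approx> Y" "J \<approx> Z" using N.card_cosets_equal JK cG P_def by (auto simp: eqpoll_def)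
    then show "Y \<approx> Z" using eqpoll_sym eqpoll_trans by blast
  qed
  have JP: "J \<in> P" using Pdef cls1 subgroup.one_closed[OF sKA] by force
  have dec: "decomposable (brace_solution A M) P"
    unfolding decomposable_def
  proof (intro ballI)
    fix Y Z assume "Y \<in> P" "Z \<in> P"
    then obtain a b where a: "a \<in> K" and b: "b \<in> K" and Y: "Y = cls a" and Z: "Z = cls b"
      using Pdef by auto
    show "brace_solution A M ` (Y \<times> Z) = Z \<times> Y"
    proof
      show "brace_solution A M ` (Y \<times> Z) \<subseteq> Z \<times> Y"
      proof clarify
        fix x y u v assume "x \<in> Y" "y \<in> Z" and uv: "(u, v) = brace_solution A M (x, y)"
        then have x: "x \<in> K" "cls x = cls a" and y: "y \<in> K" "cls y = cls b" using mem a b Y Z by auto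
        show "u \<in> Z \<and> v \<in> Y" using fwd[OF x(1) y(1)] uv x y mem a b Y Z
          by (metis fst_conv snd_conv)
      qed
    next
      show "Z \<times> Y \<subseteq> brace_solution A M ` (Y \<times> Z)"
      proof clarify
        fix u v assume "u \<in> Z" "v \<in> Y"
        then have u: "u \<in> K" "cls u = cls b" and v: "v \<in> K" "cls v = cls a" using mem a b Y Z by auto
        define a' where "a' = (u \<otimes>\<^bsub>M\<^esub> v) \<otimes>\<^bsub>A\<^esub> inv\<^bsub>A\<^esub> u"
        define b' where "b' = inv\<^bsub>M\<^esub> a' \<otimes>\<^bsub>M\<^esub> u \<otimes>\<^bsub>M\<^esub> v"
        have a'K: "a' \<in> K" unfolding a'_def by (rule aK[OF mK[OF u(1) v(1)] iK[OF u(1)]])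
        have b'K: "b' \<in> K" unfolding b'_def by (rule mK[OF mK[OF imK[OF a'K] u(1)] v(1)])
        have uA: "u \<in> carrier A" and vA: "v \<in> carrier A" and a'A: "a' \<in> carrier A"
          using u v a'K KA by auto
        have ab': "a' \<otimes>\<^bsub>M\<^esub> b' = u \<otimes>\<^bsub>M\<^esub> v"
        proof -
          have xM: "u \<in> carrier M" and yM: "v \<in> carrier M" and lM: "a' \<in> carrier M" using uA vA a'A cM by auto
          show ?thesis unfolding b'_def using xM yM lM
            by (metis M.inv_closed M.m_assoc M.m_closed M.r_inv M.l_one)
        qed
        have uvA: "u \<otimes>\<^bsub>M\<^esub> v \<in> carrier A" using uA vA cM by auto
        have l: "brace_lambda A M a' b' = u"
          unfolding brace_lambda_def ab' unfolding a'_def using uA uvA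
          by (simp add: A.inv_mult_group A.m_assoc)
        have r: "brace_solution A M (a', b') = (u, v)"
        proof -
          have b'A: "b' \<in> carrier A" using b'K KA by auto
          have "inv\<^bsub>M\<^esub> u \<otimes>\<^bsub>M\<^esub> a' \<otimes>\<^bsub>M\<^esub> b' = inv\<^bsub>M\<^esub> u \<otimes>\<^bsub>M\<^esub> (a' \<otimes>\<^bsub>M\<^esub> b')"
            using uA a'A b'A cM by (metis M.m_assoc M.inv_closed)
          also have "\<dots> = v" using ab' uA vA cM by (metis M.m_assoc M.inv_closed M.l_inv M.l_one)
          finally show ?thesis unfolding brace_solution_def using l by simp
        qed
        have f: "cls u = cls b'" "cls v = cls a'" using fwd[OF a'K b'K] r by auto
        have "(a', b') \<in> Y \<times> Z" using mem a b Y Z a'K b'K f u v by auto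
        then show "(u, v) \<in> brace_solution A M ` (Y \<times> Z)" using r by force
      qed
    qed
  qed
  show ?thesis using part eq JP dec unfolding uniform_partition_def by blast
qed

theorem theoremC:
  fixes A :: "('a, 'b) monoid_scheme" and M :: "('a, 'c) monoid_scheme"
  assumes "skew_brace A M" and "soluble_brace A M"
  shows "uniformly_multidecomposable (carrier A) (brace_solution A M)"
proof -
  have gA: "group A" and gM: "group M" and cM: "carrier M = carrier A"
    using assms(1) unfolding skew_brace_def by auto
  obtain I :: "nat \<Rightarrow> 'a set" and n where I0: "I 0 = carrier A" and In: "I n = {\<one>\<^bsub>A\<^esub>}"
    and Ih: "\<forall>i<n. I (Suc i) \<subseteq> I i \<and>
        brace_ideal (A\<lparr>carrier := I i\<rparr>) (M\<lparr>carrier := I i\<rparr>) (I (Suc i)) \<and>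
        brace_abelian_quotient A M (I i) (I (Suc i))"
    using assms(2) unfolding soluble_brace_def by blast
  have sub: "i \<le> n \<Longrightarrow> I i \<subseteq> carrier A" for i
  proof (induction i)
    case 0 then show ?case using I0 by simp
  next
    case (Suc i)
    then have "i < n" "I i \<subseteq> carrier A" by auto
    then show ?case using Ih by blast
  qed
  have "\<forall>i<n. I (Suc i) \<subseteq> I i \<and>
        (\<exists>P. uniform_partition (I i) P \<and> I (Suc i) \<in> P \<and> decomposable (brace_solution A M) P)"
  proof (intro allI impI conjI)
    fix i assume i: "i < n"
    show "I (Suc i) \<subseteq> I i" using Ih i by blast
    have id: "brace_ideal (A\<lparr>carrier := I i\<rparr>) (M\<lparr>carrier := I i\<rparr>) (I (Suc i))"
      and aq: "brace_abelian_quotient A M (I i) (I (Suc i))" using Ih i by auto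
    have nA: "I (Suc i) \<lhd> A\<lparr>carrier := I i\<rparr>" and nM: "I (Suc i) \<lhd> M\<lparr>carrier := I i\<rparr>"
      using id unfolding brace_ideal_def by auto
    have KA: "I i \<subseteq> carrier A" using sub i by simp
    have sA: "subgroup (I i) A"
      using group.group_incl_imp_subgroup[OF gA KA] normal.axioms(2)[OF nA] by blast
    have sM: "subgroup (I i) M"
      using group.group_incl_imp_subgroup[OF gM] KA cM normal.axioms(2)[OF nM] by simp
    show "\<exists>P. uniform_partition (I i) P \<and> I (Suc i) \<in> P \<and> decomposable (brace_solution A M) P"
      by (rule step_lemma[OF gA gM cM sA sM nA aq])
  qed
  then show ?thesis unfolding uniformly_multidecomposable_def using I0 In by blast
qed

end
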